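(* Let $K$ be a field of characteristic zero and $W_n$ the Witt Lie algebra. The set of locally finite elements of $W_n$ that are homogeneous with respect to the $\mathbb{Z}^n$-grading $W_n=\bigoplus_{\alpha\in\mathbb{Z}^n}x^\alpha\mathcal{H}_n$ equals $\mathcal{H}_n$.
   Context: $W_n=\mathrm{Der}_K(K[x_1^{\pm1},\ldots,x_n^{\pm1}])$, $x^\alpha=x_1^{\alpha_1}\cdots x_n^{\alpha_n}$, $\mathcal{H}_n=\bigoplus_{i=1}^nKH_i$ with $H_i=x_i\partial_i$; homogeneous elements are those lying in some $x^\alpha\mathcal{H}_n$. An element $a$ is locally finite if $\dim_K\sum_{i\ge0}K\,\mathrm{ad}(a)^i(b)<\infty$ for all $b\in W_n$. *)

theory Defs
  imports Complex_Main "HOL-Library.Function_Algebras"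
begin

text \<open>Coordinate model of the Witt algebra W_n = Der(K[x_1^{+-1},...,x_n^{+-1}]):
  W_n has K-basis x^alpha H_i (alpha in Z^n, 1 <= i <= n, H_i = x_i d_i), so an element
  is a finitely supported coefficient function w alpha i (coefficient of x^alpha H_i).
  Exponent vectors alpha in Z^n are functions nat => int vanishing from index n on;
  the index i ranges over {0..<n}.\<close>

definition exps :: "nat \<Rightarrow> (nat \<Rightarrow> int) set" where
  "exps n = {\<alpha>. \<forall>i\<ge>n. \<alpha> i = 0}"

definition Witt :: "nat \<Rightarrow> ((nat \<Rightarrow> int) \<Rightarrow> nat \<Rightarrow> 'k::field) set" where
  "Witt n = {w. finite {(\<alpha>, i). w \<alpha> i \<noteq> 0} \<and>
                (\<forall>\<alpha> i. w \<alpha> i \<noteq> 0 \<longrightarrow> \<alpha> \<in> exps n \<and> i < n)}"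

text \<open>Lie bracket, determined by
  [x^alpha H_i, x^beta H_j] = beta_i x^(alpha+beta) H_j - alpha_j x^(alpha+beta) H_i.\<close>

definition witt_bracket :: "nat \<Rightarrow> ((nat \<Rightarrow> int) \<Rightarrow> nat \<Rightarrow> 'k::field)
    \<Rightarrow> ((nat \<Rightarrow> int) \<Rightarrow> nat \<Rightarrow> 'k) \<Rightarrow> ((nat \<Rightarrow> int) \<Rightarrow> nat \<Rightarrow> 'k)" where
  "witt_bracket n a b = (\<lambda>\<gamma> k.
     \<Sum>\<alpha>\<in>{\<alpha>. \<exists>i. a \<alpha> i \<noteq> 0}.
        \<Sum>i<n. a \<alpha> i * b (\<gamma> - \<alpha>) k * of_int ((\<gamma> - \<alpha>) i)
              - a \<alpha> k * b (\<gamma> - \<alpha>) i * of_int (\<alpha> i))"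

definition wscale :: "'k::field \<Rightarrow> ((nat \<Rightarrow> int) \<Rightarrow> nat \<Rightarrow> 'k) \<Rightarrow> ((nat \<Rightarrow> int) \<Rightarrow> nat \<Rightarrow> 'k)" where
  "wscale c w = (\<lambda>\<alpha> i. c * w \<alpha> i)"

definition locally_finite :: "nat \<Rightarrow> ((nat \<Rightarrow> int) \<Rightarrow> nat \<Rightarrow> 'k::field) \<Rightarrow> bool" where
  "locally_finite n a \<longleftrightarrow> (\<forall>b\<in>Witt n. \<exists>F. finite F \<and>
      {((witt_bracket n a) ^^ i) b | i. True} \<subseteq> module.span wscale F)"

definition homogeneous :: "((nat \<Rightarrow> int) \<Rightarrow> nat \<Rightarrow> 'k::field) \<Rightarrow> bool" where
  "homogeneous a \<longleftrightarrow> (\<exists>\<alpha>. \<forall>\<beta> i. a \<beta> i \<noteq> 0 \<longrightarrow> \<beta> = \<alpha>)"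

definition cartan :: "nat \<Rightarrow> ((nat \<Rightarrow> int) \<Rightarrow> nat \<Rightarrow> 'k::field) set" where
  "cartan n = {a \<in> Witt n. \<forall>\<beta> i. a \<beta> i \<noteq> 0 \<longrightarrow> \<beta> = 0}"

end

theory Submission
  imports Defs
begin

lemma sum_app2: "(sum f A) x y = sum (\<lambda>a. f a x y) A"
  by (induction A rule: infinite_finite_induct) auto

interpretation W: vector_space "wscale :: 'k::field \<Rightarrow> ((nat \<Rightarrow> int) \<Rightarrow> nat \<Rightarrow> 'k) \<Rightarrow> _"
  by unfold_locales (auto simp: wscale_def fun_eq_iff algebra_simps)

lemma br_hom:
  fixes a :: "(nat \<Rightarrow> int) \<Rightarrow> nat \<Rightarrow> 'k::field"
  assumes supp: "{\<gamma>. \<exists>i. a \<gamma> i \<noteq> 0} = {\<alpha>}"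
    and ha: "\<And>\<gamma> k. a \<gamma> k = (if \<gamma> = \<alpha> then c k else 0)"
  shows "witt_bracket n a (\<lambda>\<gamma> k. if \<gamma> = \<delta> then t * c k else 0) =
     (\<lambda>\<gamma> k. if \<gamma> = (\<lambda>j. \<delta> j + \<alpha> j) then t * c k *
         ((\<Sum>i<n. c i * of_int (\<delta> i)) - (\<Sum>i<n. c i * of_int (\<alpha> i))) else 0)"
proof (intro ext, goal_cases)
  case (1 \<gamma> k)
  have e: "(\<gamma> - \<alpha> = \<delta>) = (\<gamma> = (\<lambda>j. \<delta> j + \<alpha> j))"
    by (auto simp: fun_eq_iff algebra_simps)
  show ?case
  proof (cases "\<gamma> - \<alpha> = \<delta>")
    case True
    then show ?thesis
      unfolding witt_bracket_def supp using e
      by (simp add: ha sum_subtractf sum_distrib_left algebra_simps)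
  next
    case False
    then show ?thesis
      unfolding witt_bracket_def supp using e by (simp add: ha)
  qed
qed

lemma iter_hom:
  fixes a :: "(nat \<Rightarrow> int) \<Rightarrow> nat \<Rightarrow> 'k::field"
  assumes supp: "{\<gamma>. \<exists>i. a \<gamma> i \<noteq> 0} = {\<alpha>}"
    and ha: "\<And>\<gamma> k. a \<gamma> k = (if \<gamma> = \<alpha> then c k else 0)"
  shows "(witt_bracket n a ^^ m) (\<lambda>\<gamma> k. if \<gamma> = \<beta> then c k else 0) =
    (\<lambda>\<gamma> k. if \<gamma> = (\<lambda>j. \<beta> j + int m * \<alpha> j) then
       (\<Prod>j<m. (\<Sum>i<n. c i * of_int (\<beta> i + int j * \<alpha> i)) - (\<Sum>i<n. c i * of_int (\<alpha> i))) * c k else 0)"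
proof (induction m)
  case 0
  then show ?case by (intro ext) simp
next
  case (Suc m)
  have d: "(\<lambda>j. (\<lambda>j. \<beta> j + int m * \<alpha> j) j + \<alpha> j) = (\<lambda>j. \<beta> j + int (Suc m) * \<alpha> j)"
    by (auto simp: fun_eq_iff algebra_simps)
  show ?case
    unfolding funpow.simps comp_def Suc.IH br_hom[OF supp ha] d
    by (intro ext) (simp add: algebra_simps)
qed

definition delt :: "(nat \<Rightarrow> int) \<times> nat \<Rightarrow> (nat \<Rightarrow> int) \<Rightarrow> nat \<Rightarrow> 'k::field" where
  "delt p = (\<lambda>\<gamma> k. if (\<gamma>, k) = p then 1 else 0)"

lemma in_span_delt:
  fixes w :: "(nat \<Rightarrow> int) \<Rightarrow> nat \<Rightarrow> 'k::field"
  assumes P: "finite P" and sub: "{(\<gamma>, k). w \<gamma> k \<noteq> 0} \<subseteq> P"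
  shows "w \<in> W.span (delt ` P)"
proof -
  have eq: "w = (\<Sum>p\<in>P. wscale (w (fst p) (snd p)) (delt p))"
  proof (intro ext)
    fix \<gamma> k
    have "(\<Sum>p\<in>P. wscale (w (fst p) (snd p)) (delt p)) \<gamma> k
        = (\<Sum>p\<in>P. if p = (\<gamma>, k) then w \<gamma> k else 0)"
      unfolding sum_app2 by (rule sum.cong) (auto simp: wscale_def delt_def)
    also have "\<dots> = w \<gamma> k"
      using P sub by (auto simp: sum.delta')
    finally show "w \<gamma> k = (\<Sum>p\<in>P. wscale (w (fst p) (snd p)) (delt p)) \<gamma> k" by simp
  qed
  show ?thesis
    by (subst eq, rule W.span_sum, rule W.span_scale, rule W.span_base) auto
qed

lemma cartan_lf:
  fixes a :: "(nat \<Rightarrow> int) \<Rightarrow> nat \<Rightarrow> 'k::field"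
  assumes aC: "a \<in> cartan n"
  shows "locally_finite n a"
  unfolding locally_finite_def
proof
  fix b :: "(nat \<Rightarrow> int) \<Rightarrow> nat \<Rightarrow> 'k" assume bW: "b \<in> Witt n"
  define \<sigma> where "\<sigma> \<gamma> = (\<Sum>i<n. a 0 i * of_int (\<gamma> i))" for \<gamma> :: "nat \<Rightarrow> int"
  have a0: "\<And>\<gamma> k. \<gamma> \<noteq> 0 \<Longrightarrow> a \<gamma> k = 0" using aC by (auto simp: cartan_def)
  have br: "witt_bracket n a w = (\<lambda>\<gamma> k. \<sigma> \<gamma> * w \<gamma> k)" for w
  proof (cases "\<exists>i. a 0 i \<noteq> 0")
    case True
    then have S: "{\<alpha>. \<exists>i. a \<alpha> i \<noteq> 0} = {0}" using a0 by auto
    show ?thesis unfolding witt_bracket_def S \<sigma>_def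
      by (intro ext) (simp, subst sum_distrib_right, simp add: mult_ac)
  next
    case False
    then have S: "{\<alpha>. \<exists>i. a \<alpha> i \<noteq> 0} = {}" 
    proof -
      have "a x i = 0" for x i using False a0 by (cases "x = 0") auto
      then show ?thesis by auto
    qed
    show ?thesis unfolding witt_bracket_def S \<sigma>_def using False
      by (intro ext) simp
  qed
  have it: "(witt_bracket n a ^^ m) b = (\<lambda>\<gamma> k. \<sigma> \<gamma> ^ m * b \<gamma> k)" for m
    by (induction m) (auto simp: br mult.assoc)
  define P where "P = {(\<gamma>, k). b \<gamma> k \<noteq> 0}"
  have P: "finite P" using bW by (auto simp: Witt_def P_def)
  show "\<exists>F. finite F \<and> {(witt_bracket n a ^^ i) b |i. True} \<subseteq> W.span F"
  proof (intro exI conjI)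
    show "finite (delt ` P)" using P by simp
    show "{(witt_bracket n a ^^ i) b |i. True} \<subseteq> W.span (delt ` P)"
    proof safe
      fix m
      show "(witt_bracket n a ^^ m) b \<in> W.span (delt ` P)"
        unfolding it by (rule in_span_delt[OF P]) (auto simp: P_def)
    qed
  qed
qed

lemma hom_lf_cartan:
  fixes a :: "(nat \<Rightarrow> int) \<Rightarrow> nat \<Rightarrow> 'k::field_char_0"
  assumes aW: "a \<in> Witt n" and hom: "homogeneous a" and lf: "locally_finite n a"
  shows "a \<in> cartan n"
proof (rule ccontr)
  assume "a \<notin> cartan n"
  then obtain \<alpha> i0 where ai0: "a \<alpha> i0 \<noteq> 0" and anz: "\<alpha> \<noteq> 0"
    using aW unfolding cartan_def by auto
  from hom obtain \<alpha>' where h\<alpha>: "\<And>\<beta> i. a \<beta> i \<noteq> 0 \<Longrightarrow> \<beta> = \<alpha>'"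
    unfolding homogeneous_def by auto
  have h\<alpha>2: "a \<beta> i \<noteq> 0 \<Longrightarrow> \<beta> = \<alpha>" for \<beta> i using h\<alpha>[of \<beta> i] h\<alpha>[of \<alpha> i0] ai0 by simp
  define c where "c = a \<alpha>"
  have ha: "a \<gamma> k = (if \<gamma> = \<alpha> then c k else 0)" for \<gamma> k
    using h\<alpha>2[of \<gamma> k] unfolding c_def by auto
  have supp: "{\<gamma>. \<exists>i. a \<gamma> i \<noteq> 0} = {\<alpha>}" using ai0 by (auto dest: h\<alpha>2)
  have ci0: "c i0 \<noteq> 0" using ai0 by (simp add: c_def)
  have cn: "c k \<noteq> 0 \<Longrightarrow> k < n" for k using aW by (simp add: Witt_def c_def)
  have i0n: "i0 < n" using cn ci0 by blast
  have \<alpha>e: "\<alpha> \<in> exps n" using aW ai0 by (simp add: Witt_def)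
  define s where "s = (\<Sum>i<n. c i * of_int (\<alpha> i))"
  have lin: "(\<Sum>i<n. c i * of_int (\<beta> i + int j * \<alpha> i)) = (\<Sum>i<n. c i * of_int (\<beta> i)) + of_nat j * s"
    for \<beta> :: "nat \<Rightarrow> int" and j :: nat
    by (simp add: s_def sum.distrib sum_distrib_left algebra_simps)
  obtain \<beta> where \<beta>e: "\<beta> \<in> exps n"
    and \<beta>nz: "\<And>j::nat. (\<Sum>i<n. c i * of_int (\<beta> i + int j * \<alpha> i)) - s \<noteq> 0"
  proof (cases "s = 0")
    case True
    define \<beta> where "\<beta> = (\<lambda>i. if i = i0 then 1 else (0::int))"
    have "(\<Sum>i<n. c i * of_int (\<beta> i)) = (\<Sum>i<n. if i = i0 then c i else 0)"
      by (rule sum.cong) (auto simp: \<beta>_def)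
    also have "\<dots> = c i0" using i0n by (simp add: sum.delta)
    finally have "(\<Sum>i<n. c i * of_int (\<beta> i)) = c i0" .
    note bc = this
    show ?thesis
    proof (rule that[of \<beta>])
      show "\<beta> \<in> exps n" using i0n by (auto simp: exps_def \<beta>_def)
      show "(\<Sum>i<n. c i * of_int (\<beta> i + int j * \<alpha> i)) - s \<noteq> 0" for j
        unfolding lin bc using True ci0 by simp
    qed
  next
    case False
    define \<beta> where "\<beta> = (\<lambda>i. 2 * \<alpha> i)"
    have "(\<Sum>i<n. c i * of_int (\<beta> i)) = 2 * s"
      by (simp add: \<beta>_def s_def sum_distrib_left algebra_simps)
    note e2 = this
    have "(\<Sum>i<n. c i * of_int (\<beta> i + int j * \<alpha> i)) - s = of_nat (Suc j) * s" for j
      unfolding lin e2 by (simp add: algebra_simps)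
    note e3 = this
    show ?thesis
    proof (rule that[of \<beta>])
      show "\<beta> \<in> exps n" using \<alpha>e by (auto simp: exps_def \<beta>_def)
      show "(\<Sum>i<n. c i * of_int (\<beta> i + int j * \<alpha> i)) - s \<noteq> 0" for j
      proof -
        have "of_nat (Suc j) \<noteq> (0::'k)" by (rule of_nat_neq_0)
        then show ?thesis unfolding e3 using False by simp
      qed
    qed
  qed
  define D where "D m = (\<lambda>j. \<beta> j + int m * \<alpha> j)" for m :: nat
  define T where "T m = (\<Prod>j<m. (\<Sum>i<n. c i * of_int (\<beta> i + int j * \<alpha> i)) - (\<Sum>i<n. c i * of_int (\<alpha> i)))" for m :: nat
  define f where "f m = (\<lambda>\<gamma> k. if \<gamma> = D m then T m * c k else 0)" for m
  define b where "b = (\<lambda>\<gamma> k. if \<gamma> = \<beta> then c k else (0::'k))"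
  have Tnz: "T m \<noteq> 0" for m using \<beta>nz by (simp add: T_def s_def)
  have Dinj: "D m = D m' \<Longrightarrow> m = m'" for m m'
  proof -
    assume "D m = D m'"
    obtain j where "\<alpha> j \<noteq> 0" using anz by (auto simp: fun_eq_iff)
    moreover have "\<beta> j + int m * \<alpha> j = \<beta> j + int m' * \<alpha> j" using \<open>D m = D m'\<close>
      by (auto simp: D_def fun_eq_iff)
    ultimately show "m = m'" by simp
  qed
  have fval: "f m (D m') i0 = (if m = m' then T m * c i0 else 0)" for m m'
    using Dinj by (auto simp: f_def)
  have it: "(witt_bracket n a ^^ m) b = f m" for m
    unfolding b_def f_def D_def T_def by (rule iter_hom[OF supp ha])
  have bW: "b \<in> Witt n"
  proof -
    have "{(\<gamma>, k). b \<gamma> k \<noteq> 0} \<subseteq> {\<beta>} \<times> {..<n}" using cn by (auto simp: b_def)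
    then have "finite {(\<gamma>, k). b \<gamma> k \<noteq> 0}" by (rule finite_subset) auto
    then show ?thesis using cn \<beta>e by (auto simp: Witt_def b_def)
  qed
  obtain F where F: "finite F" and sp: "{(witt_bracket n a ^^ i) b |i. True} \<subseteq> W.span F"
    using lf bW unfolding locally_finite_def by blast
  have rsp: "range f \<subseteq> W.span F"
  proof
    fix x assume "x \<in> range f"
    then obtain m where xm: "x = f m" by blast
    have "(witt_bracket n a ^^ m) b \<in> {(witt_bracket n a ^^ i) b |i. True}" by blast
    then have "(witt_bracket n a ^^ m) b \<in> W.span F" by (rule subsetD[OF sp])
    then show "x \<in> W.span F" unfolding it xm .
  qed
  have injf: "inj f"
  proof (rule injI)
    fix m m' assume "f m = f m'"
    then have "f m (D m) i0 = f m' (D m) i0" by simp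
    show "m = m'"
    proof (rule ccontr)
      assume "m \<noteq> m'"
      then have "f m' (D m) i0 = 0" using fval[of m' m] by simp
      moreover have "f m (D m) i0 = T m * c i0" using fval[of m m] by simp
      moreover have "T m * c i0 \<noteq> 0" using Tnz ci0 by simp
      ultimately show False using \<open>f m (D m) i0 = f m' (D m) i0\<close> by simp
    qed
  qed
  have ind: "W.independent (range f)"
    unfolding W.dependent_explicit
  proof clarify
    fix t u v
    assume t: "finite t" "t \<subseteq> range f" and s0: "(\<Sum>v\<in>t. wscale (u v) v) = 0"
      and vt: "v \<in> t" and uv: "u v \<noteq> 0"
    obtain m where vm: "v = f m" using vt t by auto
    have "0 = (\<Sum>w\<in>t. wscale (u w) w) (D m) i0" using s0 by simp
    also have "\<dots> = (\<Sum>w\<in>t. u w * w (D m) i0)" by (simp add: sum_app2 wscale_def)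
    also have "\<dots> = u v * v (D m) i0 + (\<Sum>w\<in>t - {v}. u w * w (D m) i0)"
      using t vt by (simp add: sum.remove)
    also have "(\<Sum>w\<in>t - {v}. u w * w (D m) i0) = 0"
    proof (rule sum.neutral, rule ballI)
      fix w assume w: "w \<in> t - {v}"
      then obtain m' where wm: "w = f m'" using t by auto
      then have "m' \<noteq> m" using w vm by auto
      then show "u w * w (D m) i0 = 0" using fval[of m' m] wm by simp
    qed
    finally have "u v * (T m * c i0) = 0" using fval[of m m] vm by simp
    then show False using uv Tnz ci0 by simp
  qed
  have "finite (range f)" using W.independent_span_bound[OF F ind rsp] by simp
  then have "finite (UNIV :: nat set)" using injf by (rule finite_imageD)
  then show False by simp
qed

theorem lemma2p4:
  fixes n :: nat
  shows "{a \<in> (Witt n :: ((nat \<Rightarrow> int) \<Rightarrow> nat \<Rightarrow> 'k::field_char_0) set).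
            homogeneous a \<and> locally_finite n a} = cartan n"
proof (intro set_eqI iffI)
  fix a :: "(nat \<Rightarrow> int) \<Rightarrow> nat \<Rightarrow> 'k"
  assume "a \<in> {a \<in> Witt n. homogeneous a \<and> locally_finite n a}"
  then show "a \<in> cartan n" using hom_lf_cartan by blast
next
  fix a :: "(nat \<Rightarrow> int) \<Rightarrow> nat \<Rightarrow> 'k"
  assume aC: "a \<in> cartan n"
  then have "a \<in> Witt n" "homogeneous a" by (auto simp: cartan_def homogeneous_def)
  then show "a \<in> {a \<in> Witt n. homogeneous a \<and> locally_finite n a}"
    using cartan_lf[OF aC] by simp
qed

end
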